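(* Let $m$ be a positive integer, $\tau=\sigma/m$, and consider the explicit Euler scheme $$S^{n+1} = S^n - \tau\, S^n\circ T^{n-m} - c\tau S^n,\qquad I^{n+1} = I^n + \tau\, S^n\circ T^{n-m} - b\tau I^n,\qquad R^{n+1} = R^n + b\tau I^n + c\tau S^n,$$ for $0\le n\le m\mathcal{T}/\sigma$, where for $-m\le n\le 0$ the matrices $S^n,I^n,R^n$ are the history functions evaluated on the grids $\mathcal{G}$ and $\mathcal{G}_t$. Suppose the discretized history values satisfy $D_1$–$D_4$. Then $D_2$ holds for the scheme without any restriction on $\tau$. Furthermore, if $$\tau=\frac{\sigma}{m}\le \min\left\{\frac{1}{\bar T + c},\ \frac{1}{b}\right\},\qquad \bar T=\max_{(x_k,y_l)\in\mathcal{G}} M\sum_{i=1}^p w_i\,W(x_k+\eta_i,y_l+\xi_i),$$ $$M=\max_{(x_k,y_l)\in\mathcal{G}}\{S(0,x_k,y_l)+I(0,x_k,y_l)+R(0,x_k,y_l)\},$$ then $D_1$, $D_3$ and $D_4$ also hold up to step $n\le m\mathcal{T}/\sigma$.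
   Context: $\Omega=(0,A)\times(0,B)$; spatial grid $\mathcal{G}=\{(x_k,y_l): x_k=(k-1)h_x,\ y_l=(l-1)h_y,\ 1\le k\le K,\ 1\le l\le L\}$ with $(K-1)h_x=A$, $(L-1)h_y=B$. Time grid $\mathcal{G}_t=\{t_n=n\sigma/m:\ -m\le n\le m\mathcal{T}/\sigma\}$. Constants $b,c,\sigma,\delta,\mathcal{T}>0$. $W\ge0$ is continuous and bounded. Cubature points $(x+\eta_i,y+\xi_i)$ in the open disc of radius $\delta$ around $(x,y)$, $i=1,\dots,p$, with weights $w_i>0$. For $X\in\{S,I,R\}$, $X^n$ is the $K\times L$ matrix whose $(k,l)$ entry approximates the value at $(x_k,y_l)$ and time $t_n$; $\circ$ is the entrywise (Hadamard) product. $T^{n-m}$ is the matrix with entries $T^{n-m}_{k,l}=\sum_{i=1}^p w_i W(x_k+\eta_i,y_l+\xi_i)\,\hat I^{n-m}(x_k+\eta_i,y_l+\xi_i)$, where $\hat I^{n-m}$ is obtained from the entries of $I^{n-m}$ (taken as zero outside $\Omega$) by a fixed interpolation which, for non-negative grid data, produces values between $0$ and the maximum of the grid data. Discrete properties: $D_1$: all entries of $S^n,I^n,R^n$ are non-negative; $D_2$: $S^n_{k,l}+I^n_{k,l}+R^n_{k,l}$ is independent of $n$ for every $(k,l)$; $D_3$: $S^{n+1}_{k,l}\le S^n_{k,l}$; $D_4$: $R^{n+1}_{k,l}\ge R^n_{k,l}$. *)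

theory Defs
  imports "HOL-Analysis.Analysis"
begin

text \<open>Spatial grid coordinates: x_k = (k-1) h_x, y_l = (l-1) h_y (indices start at 1).\<close>
definition gridc :: "real \<Rightarrow> nat \<Rightarrow> real" where
  "gridc h k = real (k - 1) * h"

definition Tcub ::
  "((nat \<Rightarrow> nat \<Rightarrow> real) \<Rightarrow> real \<Rightarrow> real \<Rightarrow> real) \<Rightarrow> (real \<Rightarrow> real \<Rightarrow> real) \<Rightarrow>
   nat \<Rightarrow> (nat \<Rightarrow> real) \<Rightarrow> (nat \<Rightarrow> real) \<Rightarrow> (nat \<Rightarrow> real) \<Rightarrow> real \<Rightarrow> real \<Rightarrow>
   (nat \<Rightarrow> nat \<Rightarrow> real) \<Rightarrow> nat \<Rightarrow> nat \<Rightarrow> real" where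
  "Tcub interp W p w \<eta> \<xi> hx hy Ij k l =
     (\<Sum>i\<in>{1..p}. w i * W (gridc hx k + \<eta> i) (gridc hy l + \<xi> i)
                 * interp Ij (gridc hx k + \<eta> i) (gridc hy l + \<xi> i))"

end

theory Submission
  imports Defs
begin

theorem theorem5:
  fixes A B hx hy b c sigma delta Tend :: real
    and K L m p :: nat
    and W :: "real \<Rightarrow> real \<Rightarrow> real"
    and w \<eta> \<xi> :: "nat \<Rightarrow> real"
    and interp :: "(nat \<Rightarrow> nat \<Rightarrow> real) \<Rightarrow> real \<Rightarrow> real \<Rightarrow> real"
    and Sh Ih Rh :: "real \<Rightarrow> real \<Rightarrow> real \<Rightarrow> real"
    and S I R :: "int \<Rightarrow> nat \<Rightarrow> nat \<Rightarrow> real"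
  assumes A_pos: "A > 0" and B_pos: "B > 0"
    and hx_pos: "hx > 0" and hy_pos: "hy > 0"
    and K_ge: "K \<ge> 1" and L_ge: "L \<ge> 1"
    and hxA: "real (K - 1) * hx = A" and hyB: "real (L - 1) * hy = B"
    and b_pos: "b > 0" and c_pos: "c > 0" and sigma_pos: "sigma > 0"
    and delta_pos: "delta > 0" and Tend_pos: "Tend > 0"
    and m_pos: "m > 0"
    and W_nonneg: "\<And>x y. W x y \<ge> 0"
    and W_cont: "continuous_on UNIV (\<lambda>(x, y). W x y)"
    and W_bdd: "bounded (range (\<lambda>(x, y). W x y))"
    and cub_pts: "\<And>i. i \<in> {1..p} \<Longrightarrow> (\<eta> i)\<^sup>2 + (\<xi> i)\<^sup>2 < delta\<^sup>2"
    and cub_w: "\<And>i. i \<in> {1..p} \<Longrightarrow> w i > 0"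
    and interp_local: "\<And>g g'. (\<forall>k\<in>{1..K}. \<forall>l\<in>{1..L}. g k l = g' k l) \<Longrightarrow> interp g = interp g'"
    and interp_bounds: "\<And>g x y. (\<forall>k\<in>{1..K}. \<forall>l\<in>{1..L}. g k l \<ge> 0) \<Longrightarrow>
          0 \<le> interp g x y \<and> interp g x y \<le> Max {g k l | k l. k \<in> {1..K} \<and> l \<in> {1..L}}"
    and hist: "\<And>n k l. - int m \<le> n \<Longrightarrow> n \<le> 0 \<Longrightarrow> k \<in> {1..K} \<Longrightarrow> l \<in> {1..L} \<Longrightarrow>
          S n k l = Sh (real_of_int n * sigma / real m) (gridc hx k) (gridc hy l) \<and>
          I n k l = Ih (real_of_int n * sigma / real m) (gridc hx k) (gridc hy l) \<and>
          R n k l = Rh (real_of_int n * sigma / real m) (gridc hx k) (gridc hy l)"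
    and hist_D1: "\<And>n k l. - int m \<le> n \<Longrightarrow> n \<le> 0 \<Longrightarrow> k \<in> {1..K} \<Longrightarrow> l \<in> {1..L} \<Longrightarrow>
          S n k l \<ge> 0 \<and> I n k l \<ge> 0 \<and> R n k l \<ge> 0"
    and hist_D2: "\<And>n n' k l. - int m \<le> n \<Longrightarrow> n \<le> 0 \<Longrightarrow> - int m \<le> n' \<Longrightarrow> n' \<le> 0 \<Longrightarrow>
          k \<in> {1..K} \<Longrightarrow> l \<in> {1..L} \<Longrightarrow>
          S n k l + I n k l + R n k l = S n' k l + I n' k l + R n' k l"
    and hist_D3: "\<And>n k l. - int m \<le> n \<Longrightarrow> n < 0 \<Longrightarrow> k \<in> {1..K} \<Longrightarrow> l \<in> {1..L} \<Longrightarrow>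
          S (n + 1) k l \<le> S n k l"
    and hist_D4: "\<And>n k l. - int m \<le> n \<Longrightarrow> n < 0 \<Longrightarrow> k \<in> {1..K} \<Longrightarrow> l \<in> {1..L} \<Longrightarrow>
          R (n + 1) k l \<ge> R n k l"
    and scheme: "\<And>n k l. 0 \<le> n \<Longrightarrow> real_of_int n \<le> real m * Tend / sigma \<Longrightarrow>
          k \<in> {1..K} \<Longrightarrow> l \<in> {1..L} \<Longrightarrow>
          S (n + 1) k l = S n k l
             - (sigma / real m) * S n k l * Tcub interp W p w \<eta> \<xi> hx hy (I (n - int m)) k l
             - c * (sigma / real m) * S n k l \<and>
          I (n + 1) k l = I n k l
             + (sigma / real m) * S n k l * Tcub interp W p w \<eta> \<xi> hx hy (I (n - int m)) k l
             - b * (sigma / real m) * I n k l \<and>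
          R (n + 1) k l = R n k l + b * (sigma / real m) * I n k l + c * (sigma / real m) * S n k l"
  shows
    "(\<forall>n k l. - int m \<le> n \<longrightarrow> real_of_int n \<le> real m * Tend / sigma + 1 \<longrightarrow>
        k \<in> {1..K} \<longrightarrow> l \<in> {1..L} \<longrightarrow>
        S n k l + I n k l + R n k l = S 0 k l + I 0 k l + R 0 k l)
     \<and>
     (let M = Max {Sh 0 (gridc hx k) (gridc hy l) + Ih 0 (gridc hx k) (gridc hy l)
                    + Rh 0 (gridc hx k) (gridc hy l) | k l. k \<in> {1..K} \<and> l \<in> {1..L}};
          Tbar = Max {M * (\<Sum>i\<in>{1..p}. w i * W (gridc hx k + \<eta> i) (gridc hy l + \<xi> i))
                      | k l. k \<in> {1..K} \<and> l \<in> {1..L}}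
      in sigma / real m \<le> min (1 / (Tbar + c)) (1 / b) \<longrightarrow>
        (\<forall>n k l. - int m \<le> n \<longrightarrow> real_of_int n \<le> real m * Tend / sigma + 1 \<longrightarrow>
            k \<in> {1..K} \<longrightarrow> l \<in> {1..L} \<longrightarrow>
            S n k l \<ge> 0 \<and> I n k l \<ge> 0 \<and> R n k l \<ge> 0) \<and>
        (\<forall>n k l. - int m \<le> n \<longrightarrow> real_of_int n \<le> real m * Tend / sigma \<longrightarrow>
            k \<in> {1..K} \<longrightarrow> l \<in> {1..L} \<longrightarrow>
            S (n + 1) k l \<le> S n k l \<and> R (n + 1) k l \<ge> R n k l))"
proof -
  define tau where "tau = sigma / real m"
  define bd where "bd = real m * Tend / sigma"
  have tau_pos: "tau > 0" using sigma_pos m_pos by (simp add: tau_def)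
  let ?G = "\<lambda>n k l. S n k l + I n k l + R n k l"
  have step_sum: "?G (n+1) k l = ?G n k l" if "0 \<le> n" "real_of_int n \<le> bd" "k \<in> {1..K}" "l \<in> {1..L}" for n k l
    using scheme[OF that[unfolded bd_def]] by (simp add: algebra_simps)
  have consnat: "real j \<le> bd + 1 \<longrightarrow> (\<forall>k\<in>{1..K}. \<forall>l\<in>{1..L}. ?G (int j) k l = ?G 0 k l)" for j
  proof (induction j)
    case 0 then show ?case by simp
  next
    case (Suc j)
    show ?case
    proof (intro impI ballI)
      fix k l assume h: "real (Suc j) \<le> bd + 1" and kl: "k \<in> {1..K}" "l \<in> {1..L}"
      have "?G (int j + 1) k l = ?G (int j) k l" by (rule step_sum) (use h kl in auto)
      then show "?G (int (Suc j)) k l = ?G 0 k l" using Suc h kl by (simp add: add.commute)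
    qed
  qed
  have cons: "?G n k l = ?G 0 k l" if "- int m \<le> n" "real_of_int n \<le> bd + 1" "k \<in> {1..K}" "l \<in> {1..L}" for n k l
  proof (cases "n \<le> 0")
    case True then show ?thesis using hist_D2[of n 0 k l] that by simp
  next
    case False
    then have "n = int (nat n)" by simp
    then show ?thesis using consnat[of "nat n"] that by (metis of_int_of_nat_eq)
  qed
  have part1: "\<forall>n k l. - int m \<le> n \<longrightarrow> real_of_int n \<le> real m * Tend / sigma + 1 \<longrightarrow>
        k \<in> {1..K} \<longrightarrow> l \<in> {1..L} \<longrightarrow>
        S n k l + I n k l + R n k l = S 0 k l + I 0 k l + R 0 k l"
    using cons by (simp add: bd_def)
  define M where "M = Max {Sh 0 (gridc hx k) (gridc hy l) + Ih 0 (gridc hx k) (gridc hy l)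
                    + Rh 0 (gridc hx k) (gridc hy l) | k l. k \<in> {1..K} \<and> l \<in> {1..L}}"
  define Tbar where "Tbar = Max {M * (\<Sum>i\<in>{1..p}. w i * W (gridc hx k + \<eta> i) (gridc hy l + \<xi> i))
                      | k l. k \<in> {1..K} \<and> l \<in> {1..L}}"
  have fin: "finite {f k l | k l. k \<in> {1..K} \<and> l \<in> {1..L}}" for f :: "nat \<Rightarrow> nat \<Rightarrow> real"
  proof -
    have "{f k l | k l. k \<in> {1..K} \<and> l \<in> {1..L}} = (\<lambda>(k,l). f k l) ` ({1..K} \<times> {1..L})"
    proof
      show "{f k l | k l. k \<in> {1..K} \<and> l \<in> {1..L}} \<subseteq> (\<lambda>(k,l). f k l) ` ({1..K} \<times> {1..L})"
        by (smt (verit) SigmaI case_prod_conv image_eqI mem_Collect_eq subsetI)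
      show "(\<lambda>(k,l). f k l) ` ({1..K} \<times> {1..L}) \<subseteq> {f k l | k l. k \<in> {1..K} \<and> l \<in> {1..L}}"
        by (smt (verit) SigmaE case_prod_conv image_subset_iff mem_Collect_eq)
    qed
    then show ?thesis by simp
  qed
  have G0M: "?G 0 k l \<le> M" if "k \<in> {1..K}" "l \<in> {1..L}" for k l
  proof -
    have "?G 0 k l = Sh 0 (gridc hx k) (gridc hy l) + Ih 0 (gridc hx k) (gridc hy l)
                    + Rh 0 (gridc hx k) (gridc hy l)" using hist[of 0 k l] that by simp
    moreover have "Sh 0 (gridc hx k) (gridc hy l) + Ih 0 (gridc hx k) (gridc hy l)
                    + Rh 0 (gridc hx k) (gridc hy l) \<le> M"
      unfolding M_def by (rule Max_ge[OF fin]) (use that in blast)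
    ultimately show ?thesis by simp
  qed
  have M_nonneg: "M \<ge> 0"
  proof -
    have "?G 0 1 1 \<ge> 0" using hist_D1[of 0 1 1] K_ge L_ge by simp
    then show ?thesis using G0M[of 1 1] K_ge L_ge by simp
  qed
  have TbarM: "M * (\<Sum>i\<in>{1..p}. w i * W (gridc hx k + \<eta> i) (gridc hy l + \<xi> i)) \<le> Tbar"
    if "k \<in> {1..K}" "l \<in> {1..L}" for k l
    unfolding Tbar_def by (rule Max_ge[OF fin]) (use that in blast)
  have sumW_nonneg: "(\<Sum>i\<in>{1..p}. w i * W (gridc hx k + \<eta> i) (gridc hy l + \<xi> i)) \<ge> 0" for k l
  proof (rule sum_nonneg)
    fix i assume "i \<in> {1..p}"
    then show "0 \<le> w i * W (gridc hx k + \<eta> i) (gridc hy l + \<xi> i)" using cub_w[of i] W_nonneg by simp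
  qed
  have Tbar_nonneg: "Tbar \<ge> 0"
    using TbarM[of 1 1] K_ge L_ge M_nonneg sumW_nonneg[of 1 1] by (meson atLeastAtMost_iff le_refl order_trans zero_le_mult_iff)
  have Tb: "0 \<le> Tcub interp W p w \<eta> \<xi> hx hy (I j) k l \<and> Tcub interp W p w \<eta> \<xi> hx hy (I j) k l \<le> Tbar"
    if IM: "\<forall>k\<in>{1..K}. \<forall>l\<in>{1..L}. 0 \<le> I j k l \<and> I j k l \<le> M" and kl: "k \<in> {1..K}" "l \<in> {1..L}" for j k l
  proof -
    have ib: "0 \<le> interp (I j) x y \<and> interp (I j) x y \<le> M" for x y
    proof -
      have ne: "{I j k l | k l. k \<in> {1..K} \<and> l \<in> {1..L}} \<noteq> {}" using K_ge L_ge by auto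
      have "Max {I j k l | k l. k \<in> {1..K} \<and> l \<in> {1..L}} \<le> M"
        using IM by (subst Max_le_iff[OF fin ne]) auto
      then show ?thesis using interp_bounds[of "I j" x y] IM by auto
    qed
    have "Tcub interp W p w \<eta> \<xi> hx hy (I j) k l \<le>
        (\<Sum>i\<in>{1..p}. w i * W (gridc hx k + \<eta> i) (gridc hy l + \<xi> i) * M)"
      unfolding Tcub_def
    proof (rule sum_mono)
      fix i assume "i \<in> {1..p}"
      then have "0 \<le> w i * W (gridc hx k + \<eta> i) (gridc hy l + \<xi> i)" using cub_w[of i] W_nonneg by simp
      then show "w i * W (gridc hx k + \<eta> i) (gridc hy l + \<xi> i) * interp (I j) (gridc hx k + \<eta> i) (gridc hy l + \<xi> i)
          \<le> w i * W (gridc hx k + \<eta> i) (gridc hy l + \<xi> i) * M"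
        using ib by (intro mult_left_mono) auto
    qed
    also have "\<dots> = M * (\<Sum>i\<in>{1..p}. w i * W (gridc hx k + \<eta> i) (gridc hy l + \<xi> i))"
      by (simp add: sum_distrib_left mult.commute)
    also have "\<dots> \<le> Tbar" by (rule TbarM[OF kl])
    finally have "Tcub interp W p w \<eta> \<xi> hx hy (I j) k l \<le> Tbar" .
    moreover have "0 \<le> Tcub interp W p w \<eta> \<xi> hx hy (I j) k l"
      unfolding Tcub_def
    proof (rule sum_nonneg)
      fix i assume "i \<in> {1..p}"
      then have "0 \<le> w i * W (gridc hx k + \<eta> i) (gridc hy l + \<xi> i)" using cub_w[of i] W_nonneg by simp
      then show "0 \<le> w i * W (gridc hx k + \<eta> i) (gridc hy l + \<xi> i) * interp (I j) (gridc hx k + \<eta> i) (gridc hy l + \<xi> i)"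
        using ib by simp
    qed
    ultimately show ?thesis by simp
  qed
  have part2: "tau \<le> min (1 / (Tbar + c)) (1 / b) \<Longrightarrow>
        (\<forall>n k l. - int m \<le> n \<longrightarrow> real_of_int n \<le> bd + 1 \<longrightarrow>
            k \<in> {1..K} \<longrightarrow> l \<in> {1..L} \<longrightarrow>
            S n k l \<ge> 0 \<and> I n k l \<ge> 0 \<and> R n k l \<ge> 0) \<and>
        (\<forall>n k l. - int m \<le> n \<longrightarrow> real_of_int n \<le> bd \<longrightarrow>
            k \<in> {1..K} \<longrightarrow> l \<in> {1..L} \<longrightarrow>
            S (n + 1) k l \<le> S n k l \<and> R (n + 1) k l \<ge> R n k l)"
  proof -
    assume tb: "tau \<le> min (1 / (Tbar + c)) (1 / b)"
    have tT: "tau * (Tbar + c) \<le> 1" using tb Tbar_nonneg c_pos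
      by (simp add: le_divide_eq mult.commute)
    have tb1: "tau * b \<le> 1" using tb b_pos by (simp add: le_divide_eq mult.commute)
    have onestep: "0 \<le> S (n+1) k l \<and> 0 \<le> I (n+1) k l \<and> 0 \<le> R (n+1) k l \<and> S (n+1) k l \<le> S n k l \<and> R n k l \<le> R (n+1) k l"
      if n0: "0 \<le> n" and nb: "real_of_int n \<le> bd" and kl: "k \<in> {1..K}" "l \<in> {1..L}"
        and nn: "0 \<le> S n k l" "0 \<le> I n k l" "0 \<le> R n k l"
        and IM: "\<forall>k\<in>{1..K}. \<forall>l\<in>{1..L}. 0 \<le> I (n - int m) k l \<and> I (n - int m) k l \<le> M" for n k l
    proof -
      define T where "T = Tcub interp W p w \<eta> \<xi> hx hy (I (n - int m)) k l"
      have T: "0 \<le> T" "T \<le> Tbar" using Tb[OF IM kl] by (auto simp: T_def)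
      have sch: "S (n+1) k l = S n k l * (1 - tau * T - tau * c)"
           "I (n+1) k l = I n k l * (1 - tau * b) + tau * S n k l * T"
           "R (n+1) k l = R n k l + tau * b * I n k l + tau * c * S n k l"
        using scheme[OF n0 nb[unfolded bd_def] kl] by (auto simp: T_def tau_def algebra_simps)
      have "tau * T + tau * c \<le> 1" using tT T tau_pos
        by (smt (verit, best) mult_left_mono distrib_left)
      then have a: "0 \<le> S (n+1) k l" using sch nn by simp
      have b: "0 \<le> I (n+1) k l" using sch nn tb1 tau_pos T by (simp add: add_nonneg_nonneg)
      have c: "R n k l \<le> R (n+1) k l" using sch nn tau_pos b_pos c_pos by simp
      have d: "S (n+1) k l \<le> S n k l"
      proof -
        have "0 \<le> tau * T + tau * c" using tau_pos T c_pos by simp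
        then have "0 \<le> S n k l * (tau * T + tau * c)" using nn by simp
        moreover have "S (n+1) k l = S n k l - S n k l * (tau * T + tau * c)"
          using sch(1) by (simp add: algebra_simps)
        ultimately show ?thesis by linarith
      qed
      show ?thesis using a b c d nn by linarith
    qed
    have Q: "\<forall>n. - int m \<le> n \<longrightarrow> n \<le> int j - int m \<longrightarrow> real_of_int n \<le> bd + 1 \<longrightarrow>
        (\<forall>k\<in>{1..K}. \<forall>l\<in>{1..L}. 0 \<le> S n k l \<and> 0 \<le> I n k l \<and> 0 \<le> R n k l)" for j
    proof (induction j)
      case 0
      show ?case using hist_D1 by auto
    next
      case (Suc j)
      show ?case
      proof (intro allI impI ballI)
        fix n k l assume h1: "- int m \<le> n" and h2: "n \<le> int (Suc j) - int m"
          and h3: "real_of_int n \<le> bd + 1" and kl: "k \<in> {1..K}" "l \<in> {1..L}"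
        show "0 \<le> S n k l \<and> 0 \<le> I n k l \<and> 0 \<le> R n k l"
        proof (cases "n \<le> int j - int m")
          case True then show ?thesis using Suc h1 h3 kl by blast
        next
          case False
          show ?thesis
          proof (cases "n \<le> 0")
            case True then show ?thesis using hist_D1 h1 kl by blast
          next
            case nf: False
            define n' where "n' = n - 1"
            have n'0: "0 \<le> n'" and n'b: "real_of_int n' \<le> bd" and n'j: "n' \<le> int j - int m"
              using nf h3 h2 False by (auto simp: n'_def)
            have nn0: "0 \<le> S n' k l \<and> 0 \<le> I n' k l \<and> 0 \<le> R n' k l"
              by (rule Suc.IH[rule_format]) (use n'0 n'b n'j kl in auto)
            then have nn: "0 \<le> S n' k l" "0 \<le> I n' k l" "0 \<le> R n' k l" by auto
            have IM: "\<forall>k\<in>{1..K}. \<forall>l\<in>{1..L}. 0 \<le> I (n' - int m) k l \<and> I (n' - int m) k l \<le> M"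
            proof (intro ballI)
              fix k l assume kl: "k \<in> {1..K}" "l \<in> {1..L}"
              have nn2: "0 \<le> S (n' - int m) k l \<and> 0 \<le> I (n' - int m) k l \<and> 0 \<le> R (n' - int m) k l"
              proof (rule Suc.IH[rule_format])
                have "real_of_int (n' - int m) \<le> real_of_int n'" by simp
                then show "real_of_int (n' - int m) \<le> bd + 1" using n'b by linarith
              qed (use n'0 n'j kl in auto)
              have "?G (n' - int m) k l = ?G 0 k l" by (rule cons) (use n'0 n'b kl in auto)
              then show "0 \<le> I (n' - int m) k l \<and> I (n' - int m) k l \<le> M" using nn2 G0M[OF kl] by linarith
            qed
            have "n = n' + 1" by (simp add: n'_def)
            then show ?thesis using onestep[OF n'0 n'b kl nn IM] by simp
          qed
        qed
      qed
    qed
    have D1: "\<forall>n k l. - int m \<le> n \<longrightarrow> real_of_int n \<le> bd + 1 \<longrightarrow>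
            k \<in> {1..K} \<longrightarrow> l \<in> {1..L} \<longrightarrow>
            S n k l \<ge> 0 \<and> I n k l \<ge> 0 \<and> R n k l \<ge> 0"
    proof (intro allI impI)
      fix n k l assume h: "- int m \<le> n" "real_of_int n \<le> bd + 1" "k \<in> {1..K}" "l \<in> {1..L}"
      have "n \<le> int (nat (n + int m)) - int m" using h by simp
      then show "S n k l \<ge> 0 \<and> I n k l \<ge> 0 \<and> R n k l \<ge> 0" using Q[of "nat (n + int m)"] h by blast
    qed
    have D34: "\<forall>n k l. - int m \<le> n \<longrightarrow> real_of_int n \<le> bd \<longrightarrow>
            k \<in> {1..K} \<longrightarrow> l \<in> {1..L} \<longrightarrow>
            S (n + 1) k l \<le> S n k l \<and> R (n + 1) k l \<ge> R n k l"
    proof (intro allI impI)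
      fix n k l assume h: "- int m \<le> n" "real_of_int n \<le> bd" "k \<in> {1..K}" "l \<in> {1..L}"
      show "S (n + 1) k l \<le> S n k l \<and> R (n + 1) k l \<ge> R n k l"
      proof (cases "n < 0")
        case True then show ?thesis using hist_D3 hist_D4 h by blast
      next
        case False
        then have n0: "0 \<le> n" by simp
        have nn: "0 \<le> S n k l" "0 \<le> I n k l" "0 \<le> R n k l" using D1 h by auto
        have IM: "\<forall>k\<in>{1..K}. \<forall>l\<in>{1..L}. 0 \<le> I (n - int m) k l \<and> I (n - int m) k l \<le> M"
        proof (intro ballI)
          fix k l assume kl: "k \<in> {1..K}" "l \<in> {1..L}"
          have nn2: "0 \<le> S (n - int m) k l \<and> 0 \<le> I (n - int m) k l \<and> 0 \<le> R (n - int m) k l"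
          proof (rule D1[rule_format])
            have "real_of_int (n - int m) \<le> real_of_int n" by simp
            then show "real_of_int (n - int m) \<le> bd + 1" using h by linarith
          qed (use n0 kl in auto)
          have "?G (n - int m) k l = ?G 0 k l" by (rule cons) (use n0 h kl m_pos in \<open>auto\<close>)
          then show "0 \<le> I (n - int m) k l \<and> I (n - int m) k l \<le> M" using nn2 G0M[OF kl] by linarith
        qed
        show ?thesis using onestep[OF n0 h(2) h(3) h(4) nn IM] by simp
      qed
    qed
    show ?thesis using D1 D34 by blast
  qed
  show ?thesis using part1 part2 unfolding Let_def M_def[symmetric] Tbar_def[symmetric]
    by (simp add: tau_def bd_def)
qed

end
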